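(* Let $K$ be a triangle and $p\ge1$. The space $\mathcal P_p(K;\mathbb S)$ is unisolvent with respect to the following degrees of freedom for $\sigma\in\mathcal P_p(K;\mathbb S)$: (i) for each vertex $\mathbf x$ of $K$, the 3 values $\sigma(\mathbf x)$ (the entries of the symmetric matrix); (ii) for each edge $\gamma$ of $K$, the $2(p-1)$ values $\int_\gamma(\sigma\mathbf n)\cdot r\,\mathrm ds$ for $r\in\mathcal P_{p-2}(\gamma;\mathbb V)$; (iii) the $\tfrac32p(p-1)$ values $\int_K\sigma:\tau\,\mathrm dx$ for $\tau\in\Sigma^p_0(K;\mathbb S)$. That is, a $\sigma\in\mathcal P_p(K;\mathbb S)$ on which all these functionals vanish is zero.
   Context: $\mathbb V=\mathbb R^2$ and $\mathbb S=\mathbb R^{2\times2}_{\rm sym}$; $\mathbf n$ is the outward unit normal of $K$, and $A:B=\sum_{ij}A_{ij}B_{ij}$. We set $\Sigma^p_0(K;\mathbb S)=\{\tau\in\mathcal P_p(K;\mathbb S):\tau\mathbf n|_{\partial K}=0\}$, and by convention $\mathcal P_{-1}=\{0\}$. *)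

theory Defs
  imports "HOL-Analysis.Analysis"
begin

definition polyP :: "nat \<Rightarrow> (real^2 \<Rightarrow> real) \<Rightarrow> bool" where
  "polyP d f \<longleftrightarrow> (\<exists>c :: nat \<Rightarrow> nat \<Rightarrow> real.
     \<forall>x. f x = (\<Sum>i\<le>d. \<Sum>j\<le>d - i. c i j * (x $ 1) ^ i * (x $ 2) ^ j))"

definition symPolyP :: "nat \<Rightarrow> (real^2 \<Rightarrow> real^2^2) \<Rightarrow> bool" where
  "symPolyP p \<sigma> \<longleftrightarrow> (\<forall>x. transpose (\<sigma> x) = \<sigma> x) \<and>
     (\<forall>i j. polyP p (\<lambda>x. \<sigma> x $ i $ j))"

text \<open>Univariate polynomials of degree at most d (an integer); for d < 0 only the zero
  polynomial (convention P_{-1} = {0}).\<close>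
definition upolyP :: "int \<Rightarrow> (real \<Rightarrow> real) \<Rightarrow> bool" where
  "upolyP d g \<longleftrightarrow> (if d < 0 then g = (\<lambda>_. 0)
      else (\<exists>c :: nat \<Rightarrow> real. \<forall>t. g t = (\<Sum>k\<le>nat d. c k * t ^ k)))"

text \<open>P_d(gamma;V) for an edge, parametrised affinely by t in [0,1].\<close>
definition vpolyP :: "int \<Rightarrow> (real \<Rightarrow> real^2) \<Rightarrow> bool" where
  "vpolyP d r \<longleftrightarrow> (\<forall>i. upolyP d (\<lambda>t. r t $ i))"

definition frob :: "real^2^2 \<Rightarrow> real^2^2 \<Rightarrow> real" where
  "frob A B = (\<Sum>i\<in>UNIV. \<Sum>j\<in>UNIV. A $ i $ j * B $ i $ j)"

definition edge_normal :: "real^2 \<Rightarrow> real^2 \<Rightarrow> real^2 \<Rightarrow> real^2" where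
  "edge_normal u v w =
     (let t = (1 / norm (v - u)) *\<^sub>R (\<chi> i. if i = 1 then - ((v - u) $ 2) else (v - u) $ 1)
      in if t \<bullet> (w - u) < 0 then t else - t)"

text \<open>The line integral over the edge [u,v]:  int_gamma (sigma n) . r ds, with the edge
  parametrised by x = u + t (v - u), t in [0,1], so ds = |v - u| dt.\<close>
definition edge_moment :: "(real^2 \<Rightarrow> real^2^2) \<Rightarrow> real^2 \<Rightarrow> real^2 \<Rightarrow> real^2
     \<Rightarrow> (real \<Rightarrow> real^2) \<Rightarrow> real" where
  "edge_moment \<sigma> u v w r =
     integral {0..1} (\<lambda>t. ((\<sigma> (u + t *\<^sub>R (v - u)) *v edge_normal u v w) \<bullet> r t) * norm (v - u))"

definition Sigma0 :: "nat \<Rightarrow> real^2 \<Rightarrow> real^2 \<Rightarrow> real^2 \<Rightarrow> (real^2 \<Rightarrow> real^2^2) \<Rightarrow> bool" where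
  "Sigma0 p a b c \<tau> \<longleftrightarrow> symPolyP p \<tau> \<and>
     (\<forall>x\<in>closed_segment a b. \<tau> x *v edge_normal a b c = 0) \<and>
     (\<forall>x\<in>closed_segment b c. \<tau> x *v edge_normal b c a = 0) \<and>
     (\<forall>x\<in>closed_segment c a. \<tau> x *v edge_normal c a b = 0)"

end

theory Submission
  imports Defs "HOL-Computational_Algebra.Polynomial"
begin

lemma deg_term_le:
  fixes c a1 b1 a2 b2 :: real
  shows "degree ([:c:] * [:a1, b1:] ^ i * [:a2, b2:] ^ j) \<le> i + j"
proof -
  have "degree ([:c:] * [:a1, b1:] ^ i * [:a2, b2:] ^ j)
      \<le> degree ([:c:] * [:a1, b1:] ^ i) + degree ([:a2, b2:] ^ j)"
    by (rule degree_mult_le)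
  also have "\<dots> \<le> (degree [:c:] + degree ([:a1, b1:] ^ i)) + degree ([:a2, b2:] ^ j)"
    using degree_mult_le by (metis add_le_mono le_refl)
  also have "\<dots> \<le> (0 + degree [:a1, b1:] * i) + degree [:a2, b2:] * j"
    using degree_power_le by (metis add_le_mono degree_pCons_0 le_refl)
  also have "\<dots> \<le> i + j"
  proof -
    have "degree [:a1, b1:] \<le> 1" "degree [:a2, b2:] \<le> 1" by (auto simp: degree_pCons_le)
    then show ?thesis by (simp add: add_le_mono mult_le_mono1)
  qed
  finally show ?thesis .
qed

lemma polyP_line:
  assumes "polyP d f"
  shows "\<exists>P. degree P \<le> d \<and> (\<forall>t. f (u + t *\<^sub>R w) = poly P t)"
proof -
  obtain c where c: "\<forall>x. f x = (\<Sum>i\<le>d. \<Sum>j\<le>d - i. c i j * (x $ 1) ^ i * (x $ 2) ^ j)"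
    using assms polyP_def by auto
  define P where "P = (\<Sum>i\<le>d. \<Sum>j\<le>d - i. [:c i j:] * [:u$1, w$1:] ^ i * [:u$2, w$2:] ^ j)"
  have "degree P \<le> d" unfolding P_def
  proof (rule degree_sum_le, simp)
    fix i assume i: "i \<in> {..d}"
    show "degree (\<Sum>j\<le>d - i. [:c i j:] * [:u$1, w$1:] ^ i * [:u$2, w$2:] ^ j) \<le> d"
    proof (rule degree_sum_le, simp)
      fix j assume "j \<in> {..d - i}"
      then have ij: "i + j \<le> d" using i by auto
      show "degree ([:c i j:] * [:u$1, w$1:] ^ i * [:u$2, w$2:] ^ j) \<le> d"
        by (rule le_trans[OF deg_term_le ij])
    qed
  qed
  moreover have "\<forall>t. f (u + t *\<^sub>R w) = poly P t"
  proof
    fix t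
    have "f (u + t *\<^sub>R w) = (\<Sum>i\<le>d. \<Sum>j\<le>d - i. c i j * (u$1 + t * w$1) ^ i * (u$2 + t * w$2) ^ j)"
      by (simp add: c)
    also have "\<dots> = poly P t"
      by (simp add: P_def poly_sum mult.assoc)
    finally show "f (u + t *\<^sub>R w) = poly P t" .
  qed
  ultimately show ?thesis by blast
qed

lemma factor01:
  fixes P :: "real poly"
  assumes "poly P 0 = 0" "poly P 1 = 0" "degree P \<le> p"
  shows "\<exists>Q. (\<forall>t. poly P t = t * (1 - t) * poly Q t) \<and> (Q = 0 \<or> (p \<ge> 2 \<and> degree Q \<le> p - 2))"
proof -
  obtain P1 where P1: "P = [:0, 1:] * P1"
    using assms(1) poly_eq_0_iff_dvd[of P 0] by (auto elim: dvdE)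
  then have "poly P1 1 = 0" using assms(2) by simp
  then obtain Q where Q: "P1 = [:-1, 1:] * Q"
    using poly_eq_0_iff_dvd[of P1 1] by (auto elim: dvdE)
  have ev: "\<forall>t. poly P t = t * (1 - t) * poly (-Q) t"
    by (simp add: P1 Q algebra_simps)
  show ?thesis
  proof (cases "Q = 0")
    case True then show ?thesis using ev by (intro exI[of _ "-Q"]) simp
  next
    case False
    have d1: "degree ([:-1,1:]*Q) = Suc (degree Q)" using False
      by (subst degree_mult_eq) auto
    have nz: "[:-1,1:]*Q \<noteq> 0" using False mult_eq_0_iff[of "[:-1,1::real:]" Q] pCons_eq_0_iff
      by (metis one_neq_zero)
    have "degree P = 2 + degree Q" unfolding P1 Q using nz d1
      by (subst degree_mult_eq) auto
    then have "p \<ge> 2 \<and> degree (-Q) \<le> p - 2" using assms(3) by simp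
    then show ?thesis using ev by blast
  qed
qed

lemma upoly_ok:
  assumes "Q = 0 \<or> (p \<ge> 2 \<and> degree Q \<le> p - 2)"
  shows "upolyP (int p - 2) (poly Q)"
proof (cases "Q = 0")
  case True then show ?thesis by (auto simp: upolyP_def intro: exI[of _ "\<lambda>_. 0"])
next
  case False
  then have h: "p \<ge> 2" "degree Q \<le> p - 2" using assms by auto
  have e: "int p - 2 = int (p - 2)" using h by auto
  have "poly Q t = (\<Sum>k\<le>p - 2. coeff Q k * t ^ k)" for t
    unfolding poly_altdef
    by (rule sum.mono_neutral_left) (use h in \<open>auto simp: coeff_eq_0\<close>)
  then show ?thesis unfolding upolyP_def e by auto
qed

lemma int01_zero:
  fixes g :: "real \<Rightarrow> real"
  assumes "continuous_on {0..1} g" "\<And>t. t \<in> {0..1} \<Longrightarrow> g t \<ge> 0" "integral {0..1} g = 0"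
    "t \<in> {0..1}"
  shows "g t = 0"
proof -
  have "(g has_integral 0) {0..1}"
    using integrable_continuous_real[OF assms(1)] assms(3) by (metis has_integral_integral)
  then show ?thesis
    using has_integral_0_cbox_imp_0[of 0 1 g] assms by (auto simp: cbox_interval)
qed

lemma edge_zero:
  fixes u v w :: "real^2" and \<sigma> :: "real^2 \<Rightarrow> real^2^2"
  assumes uv: "u \<noteq> v" and sig: "symPolyP p \<sigma>" and su: "\<sigma> u = 0" and sv: "\<sigma> v = 0"
    and mom: "\<And>r. vpolyP (int p - 2) r \<Longrightarrow> edge_moment \<sigma> u v w r = 0"
  shows "\<forall>x\<in>closed_segment u v. \<sigma> x *v edge_normal u v w = 0"
proof -
  define nn where "nn = edge_normal u v w"
  have "\<forall>i j. \<exists>P. degree P \<le> p \<and> (\<forall>t. \<sigma> (u + t *\<^sub>R (v - u)) $ i $ j = poly P t)"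
    using sig unfolding symPolyP_def by (auto intro: polyP_line)
  then obtain P where P: "\<And>i j. degree (P i j) \<le> p"
     "\<And>i j t. \<sigma> (u + t *\<^sub>R (v - u)) $ i $ j = poly (P i j) t"
    by metis
  define F where "F i = (\<Sum>j\<in>UNIV. smult (nn $ j) (P i j))" for i
  have Fval: "poly (F i) t = (\<sigma> (u + t *\<^sub>R (v - u)) *v nn) $ i" for i t
    by (simp add: F_def poly_sum matrix_vector_mult_def P mult.commute)
  have Fdeg: "degree (F i) \<le> p" for i
    unfolding F_def by (rule degree_sum_le) (auto intro: le_trans[OF degree_smult_le] P)
  have F0: "poly (F i) 0 = 0" for i using Fval[of i 0] su by simp
  have F1: "poly (F i) 1 = 0" for i using Fval[of i 1] sv by simp
  obtain Q where Q: "\<And>i t. poly (F i) t = t * (1 - t) * poly (Q i) t"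
    "\<And>i. Q i = 0 \<or> (p \<ge> 2 \<and> degree (Q i) \<le> p - 2)"
    using factor01[OF F0 F1 Fdeg] by metis
  define r where "r t = (\<chi> i. poly (Q i) t)" for t
  have "vpolyP (int p - 2) r"
    unfolding vpolyP_def r_def using upoly_ok[OF Q(2)] by simp
  then have m0: "edge_moment \<sigma> u v w r = 0" by (rule mom)
  define L where "L = norm (v - u)"
  have L: "L > 0" using uv by (simp add: L_def)
  define g where "g t = t * (1 - t) * ((poly (Q 1) t)^2 + (poly (Q 2) t)^2) * L" for t
  have geq: "((\<sigma> (u + t *\<^sub>R (v - u)) *v nn) \<bullet> r t) * L = g t" for t
  proof -
    have c: "(\<sigma> (u + t *\<^sub>R (v - u)) *v nn) $ i = t * (1 - t) * poly (Q i) t" for i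
      using Fval Q(1) by metis
    show ?thesis
      unfolding inner_vec_def sum_2 c
      by (simp add: r_def g_def power2_eq_square algebra_simps)
  qed
  have gint: "integral {0..1} g = 0"
    using m0 unfolding edge_moment_def nn_def[symmetric] L_def[symmetric] geq by simp
  have gcont: "continuous_on {0..1} g" unfolding g_def by (intro continuous_intros)
  have gnn: "g t \<ge> 0" if "t \<in> {0..1}" for t
    using that L unfolding g_def by (intro mult_nonneg_nonneg) auto
  have g0: "g t = 0" if "t \<in> {0..1}" for t
    using int01_zero[OF gcont gnn gint that] .
  have Fz: "poly (F i) t = 0" if "t \<in> {0..1}" for i t
  proof (cases "t * (1 - t) = 0")
    case True then show ?thesis by (simp add: Q(1))
  next
    case False
    then have "(poly (Q 1) t)^2 + (poly (Q 2) t)^2 = 0"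
      using g0[OF that] L unfolding g_def by simp
    then have "poly (Q 1) t = 0" "poly (Q 2) t = 0"
      by (simp_all add: sum_power2_eq_zero_iff)
    then have "poly (Q i) t = 0" using exhaust_2[of i] by auto
    then show ?thesis by (simp add: Q(1))
  qed
  show ?thesis
  proof
    fix x assume "x \<in> closed_segment u v"
    then obtain t where t: "t \<in> {0..1}" "x = u + t *\<^sub>R (v - u)"
      unfolding closed_segment_def by (auto simp: algebra_simps)
    show "\<sigma> x *v edge_normal u v w = 0"
      unfolding vec_eq_iff nn_def[symmetric] using Fz[OF t(1)] Fval t(2) by simp
  qed
qed

lemma compact_integrable:
  fixes f :: "real^2 \<Rightarrow> real"
  assumes "compact S" "continuous_on S f"
  shows "f integrable_on S"
proof -
  have "integrable lborel (\<lambda>x. indicator S x *\<^sub>R f x)"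
    by (rule borel_integrable_compact[OF assms])
  then have "(\<lambda>x. indicator S x *\<^sub>R f x) integrable_on UNIV"
    by (rule integrable_on_lborel)
  moreover have "(\<lambda>x. indicator S x *\<^sub>R f x) = (\<lambda>x. if x \<in> S then f x else 0)"
    by (auto simp: indicator_def fun_eq_iff)
  ultimately have "(\<lambda>x. if x \<in> S then f x else 0) integrable_on UNIV"
    by simp
  then show ?thesis by (simp add: integrable_restrict_UNIV)
qed

lemma polyP_cont:
  assumes "polyP d f" shows "continuous_on S f"
proof -
  obtain c where c: "\<forall>x. f x = (\<Sum>i\<le>d. \<Sum>j\<le>d - i. c i j * (x $ 1) ^ i * (x $ 2) ^ j)"
    using assms polyP_def by auto
  have e: "f = (\<lambda>x. \<Sum>i\<le>d. \<Sum>j\<le>d - i. c i j * (x $ 1) ^ i * (x $ 2) ^ j)"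
    using c by auto
  have "continuous_on S (\<lambda>x::real^2. x $ k)" for k
    by (intro linear_continuous_on bounded_linear_vec_nth bounded_linear_ident)
  then show ?thesis unfolding e by (intro continuous_intros)
qed

theorem lemma3p2:
  fixes a b c :: "real^2" and p :: nat and \<sigma> :: "real^2 \<Rightarrow> real^2^2"
  assumes tri: "\<not> collinear {a, b, c}"
    and p1: "p \<ge> 1"
    and sig: "symPolyP p \<sigma>"
    and vert: "\<sigma> a = 0" "\<sigma> b = 0" "\<sigma> c = 0"
    and edges: "\<And>r. vpolyP (int p - 2) r \<Longrightarrow> edge_moment \<sigma> a b c r = 0"
               "\<And>r. vpolyP (int p - 2) r \<Longrightarrow> edge_moment \<sigma> b c a r = 0"
               "\<And>r. vpolyP (int p - 2) r \<Longrightarrow> edge_moment \<sigma> c a b r = 0"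
    and interior: "\<And>\<tau>. Sigma0 p a b c \<tau> \<Longrightarrow>
                      integral (convex hull {a, b, c}) (\<lambda>x. frob (\<sigma> x) (\<tau> x)) = 0"
  shows "\<sigma> = (\<lambda>x. 0)"
proof -
  have nd: "\<not> (a = b \<or> a = c \<or> b = c \<or> affine_dependent {a, b, c})"
    by (subst collinear_3_eq_affine_dependent[symmetric]) (rule tri)
  have dist: "a \<noteq> b" "a \<noteq> c" "b \<noteq> c" and ind: "\<not> affine_dependent {a, b, c}"
    using nd by simp_all
  have "Sigma0 p a b c \<sigma>"
    unfolding Sigma0_def
    using sig edge_zero[OF dist(1) sig vert(1,2) edges(1)]
      edge_zero[OF dist(3) sig vert(2,3) edges(2)]
      edge_zero[OF dist(2)[symmetric] sig vert(3,1) edges(3)] by blast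
  then have I0: "integral (convex hull {a, b, c}) (\<lambda>x. frob (\<sigma> x) (\<sigma> x)) = 0"
    by (rule interior)
  define K where "K = convex hull {a, b, c}"
  define h where "h x = frob (\<sigma> x) (\<sigma> x)" for x
  have pe: "polyP p (\<lambda>x. \<sigma> x $ i $ j)" for i j using sig symPolyP_def by auto
  have ce: "continuous_on S (\<lambda>x. \<sigma> x $ i $ j)" for S i j by (rule polyP_cont[OF pe])
  have hexp: "h x = (\<sigma> x $ 1 $ 1)^2 + (\<sigma> x $ 1 $ 2)^2 + ((\<sigma> x $ 2 $ 1)^2 + (\<sigma> x $ 2 $ 2)^2)" for x
    by (simp add: h_def frob_def sum_2 power2_eq_square)
  have hcont: "continuous_on S h" for S
    unfolding hexp by (intro continuous_intros ce)
  have hnn: "h x \<ge> 0" for x unfolding hexp by simp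
  have Kc: "compact K" unfolding K_def by (simp add: compact_convex_hull)
  have card3: "card {a, b, c} = Suc DIM(real^2)" using dist by simp
  have "interior K \<noteq> {}"
    unfolding K_def using interior_convex_hull_eq_empty[OF card3] ind by blast
  then obtain x0 where x0: "x0 \<in> interior K" by blast
  obtain lo hi where box: "cbox lo hi \<subseteq> interior K" "x0 \<in> box lo hi"
    using open_contains_cbox[OF open_interior x0] by metis
  have sub: "cbox lo hi \<subseteq> K" using box(1) interior_subset by blast
  have "integral (cbox lo hi) h \<le> integral K h"
    by (rule integral_subset_le[OF sub integrable_continuous[OF hcont] compact_integrable[OF Kc hcont]])
      (simp add: hnn)
  moreover have "integral K h = 0" using I0 unfolding K_def h_def .
  moreover have "integral (cbox lo hi) h \<ge> 0"
    by (rule integral_nonneg[OF integrable_continuous[OF hcont]]) (simp add: hnn)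
  ultimately have "(h has_integral 0) (cbox lo hi)"
    using integrable_continuous[OF hcont] by (metis has_integral_integral order_antisym)
  then have hz: "h x = 0" if "x \<in> cbox lo hi" for x
    using has_integral_0_cbox_imp_0[OF hcont hnn _ _ that] box(2) by blast
  have sz: "\<sigma> x $ i $ j = 0" if "x \<in> box lo hi" for x i j
  proof -
    have "h x = 0" using hz that box_subset_cbox by blast
    then have "\<sigma> x $ 1 $ 1 = 0 \<and> \<sigma> x $ 1 $ 2 = 0 \<and> \<sigma> x $ 2 $ 1 = 0 \<and> \<sigma> x $ 2 $ 2 = 0"
      unfolding hexp by (simp add: add_nonneg_eq_0_iff)
    then show ?thesis using exhaust_2[of i] exhaust_2[of j] by auto
  qed
  obtain e where e: "e > 0" "ball x0 e \<subseteq> box lo hi"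
    using open_contains_ball_eq[OF open_box] box(2) by blast
  show ?thesis
  proof
    fix x
    show "\<sigma> x = 0"
    proof (subst vec_eq_iff, intro allI, subst vec_eq_iff, intro allI)
      fix i j
      obtain P where P: "\<And>t. \<sigma> (x0 + t *\<^sub>R (x - x0)) $ i $ j = poly P t"
        using polyP_line[OF pe, of x0 "x - x0"] by blast
      define N where "N = norm (x - x0)"
      define \<delta> where "\<delta> = e / (N + 1)"
      have N: "N \<ge> 0" by (simp add: N_def)
      have dpos: "\<delta> > 0" using e N by (simp add: \<delta>_def)
      have "{0..\<delta>} \<subseteq> {t. poly P t = 0}"
      proof
        fix t assume t: "t \<in> {0..\<delta>}"
        have "t * N \<le> \<delta> * N" using t N by (simp add: mult_right_mono)
        also have "\<dots> < \<delta> * (N + 1)" using dpos by simp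
        also have "\<dots> = e" using N by (simp add: \<delta>_def)
        finally have "dist x0 (x0 + t *\<^sub>R (x - x0)) < e"
          using t by (simp add: dist_norm N_def)
        then have "x0 + t *\<^sub>R (x - x0) \<in> box lo hi" using e(2) by auto
        then have "\<sigma> (x0 + t *\<^sub>R (x - x0)) $ i $ j = 0" by (rule sz)
        then show "t \<in> {t. poly P t = 0}" using P[of t] by simp
      qed
      then have "P = 0" using poly_roots_finite infinite_Icc[OF dpos] finite_subset by blast
      then show "\<sigma> x $ i $ j = (0 :: real^2^2) $ i $ j" using P[of 1] by simp
    qed
  qed
qed

end
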